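(* Let $R$ be a commutative ring with unity in which every zero divisor is harmless. If $r\in R$ is a non-zero F-irreducible element, then $r$ is B-irreducible.
   Context: A zero divisor $r$ of $R$ is called harmless if there exists a unit $u\in R$ with $r=1-u$. A non-zero, non-unit element $r\in R$ is called B-irreducible if the principal ideal $(r)$ is a maximal element, with respect to inclusion, of the set of all proper principal ideals of $R$. A factorization of $r$ is an expression $r=a_1\cdots a_n$ with $a_i\in R$; a refinement of this factorization is a factorization obtained by replacing one or more of the factors $a_i$ by a factorization of $a_i$. A non-unit element $r\in R$ is called F-irreducible if every factorization of $r$ has a refinement in which $r$ appears as one of the new factors. *)

theory Defs
  imports Main
begin

definition zero_divisor :: "'a::comm_ring_1 \<Rightarrow> bool" where
  "zero_divisor r \<longleftrightarrow> (\<exists>s. s \<noteq> 0 \<and> r * s = 0)"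

definition harmless :: "'a::comm_ring_1 \<Rightarrow> bool" where
  "harmless r \<longleftrightarrow> zero_divisor r \<and> (\<exists>u. u dvd 1 \<and> r = 1 - u)"

definition pideal :: "'a::comm_ring_1 \<Rightarrow> 'a set" where
  "pideal a = {a * x | x. True}"

definition B_irreducible :: "'a::comm_ring_1 \<Rightarrow> bool" where
  "B_irreducible r \<longleftrightarrow> r \<noteq> 0 \<and> \<not> r dvd 1 \<and> pideal r \<noteq> UNIV \<and>
     (\<forall>a. pideal a \<noteq> UNIV \<and> pideal r \<subseteq> pideal a \<longrightarrow> pideal a = pideal r)"

text \<open>A refinement of the factorization as: each factor as!i is replaced by a
  factorization bs!i of it (a one-element list means the factor is kept).\<close>
definition is_refinement :: "'a::comm_ring_1 list list \<Rightarrow> 'a list \<Rightarrow> bool" where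
  "is_refinement bs as \<longleftrightarrow> length bs = length as \<and>
     (\<forall>i < length as. prod_list (bs ! i) = as ! i)"

definition F_irreducible :: "'a::comm_ring_1 \<Rightarrow> bool" where
  "F_irreducible r \<longleftrightarrow> \<not> r dvd 1 \<and>
     (\<forall>as. prod_list as = r \<longrightarrow>
        (\<exists>bs. is_refinement bs as \<and> (\<exists>i < length bs. r \<in> set (bs ! i))))"

end

theory Submission
  imports Defs
begin

lemma pideal_eq: "pideal a = {y. a dvd y}"
  unfolding pideal_def by (auto simp: dvd_def mult.commute)

lemma mem_dvd_prod_list: "(x::'a::comm_ring_1) \<in> set l \<Longrightarrow> x dvd prod_list l"
  by (induction l) auto

lemma pideal_UNIV: "pideal (a::'a::comm_ring_1) = UNIV \<longleftrightarrow> a dvd 1"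
  unfolding pideal_eq by (auto intro: dvd_trans)

theorem mainTheorem4:
  fixes r :: "'a::comm_ring_1"
  assumes "\<forall>z::'a. zero_divisor z \<longrightarrow> harmless z"
    and "r \<noteq> 0"
    and "F_irreducible r"
  shows "B_irreducible r"
proof -
  have nu: "\<not> r dvd 1" using assms(3) unfolding F_irreducible_def by blast
  have main: "pideal a = pideal r" if a1: "\<not> a dvd 1" and sub: "pideal r \<subseteq> pideal a" for a
  proof -
    have "r \<in> pideal r" unfolding pideal_eq by simp
    then have "a dvd r" using sub unfolding pideal_eq by (simp add: subset_iff)
    then obtain x where rx: "r = a * x" by (auto simp: dvd_def)
    then have "prod_list [a, x] = r" by simp
    then obtain bs where ref: "is_refinement bs [a, x]" and i: "\<exists>i < length bs. r \<in> set (bs ! i)"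
      using assms(3) unfolding F_irreducible_def by blast
    from ref have lb: "length bs = 2" and p0: "prod_list (bs!0) = a" and p1: "prod_list (bs!1) = x"
      unfolding is_refinement_def by auto
    from i lb obtain i where "i < 2" "r \<in> set (bs ! i)" by auto
    then have "r \<in> set (bs!0) \<or> r \<in> set (bs!1)" by (cases i) auto
    then show ?thesis
    proof
      assume "r \<in> set (bs!0)"
      then have "r dvd a" using mem_dvd_prod_list p0 by metis
      then show ?thesis using sub unfolding pideal_eq by (auto intro: dvd_trans)
    next
      assume "r \<in> set (bs!1)"
      then have "r dvd x" using mem_dvd_prod_list p1 by metis
      then obtain y where xy: "x = r * y" by (auto simp: dvd_def)
      have "(1 - a * y) * r = 0" using rx xy by (simp add: algebra_simps)
      then have "zero_divisor (1 - a * y)" unfolding zero_divisor_def using assms(2) by blast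
      then obtain u where "u dvd 1" "1 - a * y = 1 - u"
        using assms(1) unfolding harmless_def by blast
      then have "a * y dvd 1" by simp
      then have "a dvd 1" using dvd_mult_left by blast
      with a1 show ?thesis by simp
    qed
  qed
  show ?thesis unfolding B_irreducible_def
    using assms(2) nu main by (auto simp: pideal_UNIV)
qed

end
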